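(* Let $\kappa\ge1$, $n\ge1$ be integers and $0<\epsilon<1$. Let $\mathcal{C}=\{q\in\mathbb{R}^{2^\kappa}: q_i\ge0\ \forall i,\ \sum_{i=0}^{2^\kappa-1}q_i=1\}$. If $q\in\mathcal{C}$ is a local minimizer of $q\mapsto\lambda(n,\epsilon,q)$ on $\mathcal{C}$, then $q_0=0$.
   Context: $W=\mathbb{F}_2^\kappa$; $\nu(i)\in W$ is the binary expansion of $i\in\{0,\dots,2^\kappa-1\}$; vectors $q$ are indexed $q_0,\dots,q_{2^\kappa-1}$. For a subspace $S\subseteq W$, $\zeta(S,q)=\sum_{i:\nu(i)\in S}q_i$; $\Xi(W,\kappa-1)$ is the set of $(\kappa-1)$-dimensional subspaces of $W$. For real $q$ define $\lambda(n,\epsilon,q)=(2-\epsilon)^n2^{-\kappa}\Big(1+\sum_{S\in\Xi(W,\kappa-1)}\big(\tfrac{\epsilon}{2-\epsilon}\big)^{n(1-\zeta(S,q))}\Big)-1$ (for $q$ the column-distribution vector of a generator matrix, this is the $\chi^2$ divergence between $p_{MZ}$ and $p_Mp_Z$ for the coset code over a binary erasure channel with erasure probability $\epsilon$). A local minimizer of $f$ on $\mathcal{C}$ is a point $q\in\mathcal{C}$ with $f(q)\le f(q')$ for all $q'\in\mathcal{C}$ in some neighborhood of $q$. *)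

theory Defs
  imports "HOL-Analysis.Analysis"
begin

text \<open>W = F_2^kappa is represented by the naturals below 2^kappa, vector addition
  being bitwise xor; the binary-expansion map nu is then the identity on indices.\<close>

definition W :: "nat \<Rightarrow> nat set" where
  "W \<kappa> = {..<2^\<kappa>}"

definition lin_comb :: "nat list \<Rightarrow> bool list \<Rightarrow> nat" where
  "lin_comb bs cs = foldr (\<lambda>(b, c) acc. if c then Bit_Operations.xor b acc else acc) (zip bs cs) 0"

definition span2 :: "nat list \<Rightarrow> nat set" where
  "span2 bs = {lin_comb bs cs | cs. length cs = length bs}"

definition lin_indep2 :: "nat list \<Rightarrow> bool" where
  "lin_indep2 bs \<longleftrightarrow> (\<forall>cs. length cs = length bs \<longrightarrow> lin_comb bs cs = 0 \<longrightarrow> (\<forall>c\<in>set cs. \<not> c))"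

definition is_subspace :: "nat \<Rightarrow> nat set \<Rightarrow> bool" where
  "is_subspace \<kappa> S \<longleftrightarrow> S \<subseteq> W \<kappa> \<and> 0 \<in> S \<and> (\<forall>x\<in>S. \<forall>y\<in>S. Bit_Operations.xor x y \<in> S)"

definition subspace_dim :: "nat \<Rightarrow> nat \<Rightarrow> nat set \<Rightarrow> bool" where
  "subspace_dim \<kappa> d S \<longleftrightarrow> is_subspace \<kappa> S \<and>
     (\<exists>bs. length bs = d \<and> set bs \<subseteq> S \<and> lin_indep2 bs \<and> span2 bs = S)"

definition Xi :: "nat \<Rightarrow> nat \<Rightarrow> nat set set" where
  "Xi \<kappa> d = {S. subspace_dim \<kappa> d S}"

definition zeta :: "nat set \<Rightarrow> (nat \<Rightarrow> real) \<Rightarrow> real" where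
  "zeta S q = (\<Sum>i\<in>S. q i)"

definition lam :: "nat \<Rightarrow> nat \<Rightarrow> real \<Rightarrow> (nat \<Rightarrow> real) \<Rightarrow> real" where
  "lam \<kappa> n \<epsilon> q = (2 - \<epsilon>) ^ n * 2 powr (- real \<kappa>) *
     (1 + (\<Sum>S\<in>Xi \<kappa> (\<kappa> - 1). (\<epsilon> / (2 - \<epsilon>)) powr (real n * (1 - zeta S q)))) - 1"

definition prob_simplex :: "nat \<Rightarrow> (nat \<Rightarrow> real) set" where
  "prob_simplex \<kappa> = {q. (\<forall>i<2^\<kappa>. q i \<ge> 0) \<and> (\<forall>i\<ge>2^\<kappa>. q i = 0) \<and> (\<Sum>i<2^\<kappa>. q i) = 1}"

text \<open>Local minimizer on a set C, w.r.t. the sup-norm distance on the first N coordinates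
  (all norms on R^N are equivalent).\<close>
definition local_minimizer :: "nat \<Rightarrow> ((nat \<Rightarrow> real) \<Rightarrow> real) \<Rightarrow> (nat \<Rightarrow> real) set \<Rightarrow> (nat \<Rightarrow> real) \<Rightarrow> bool" where
  "local_minimizer N f C q \<longleftrightarrow> q \<in> C \<and>
     (\<exists>\<delta>>0. \<forall>q'\<in>C. (\<forall>i<N. \<bar>q' i - q i\<bar> < \<delta>) \<longrightarrow> f q \<le> f q')"

end

theory Submission imports Defs begin
lemma xor_pow: "(x::nat) < 2^k \<Longrightarrow> xor (2^k) x = 2^k + x"
proof -
  assume a: "x < 2^k"
  have "\<not> bit x k" using a by (simp add: bit_iff_odd)
  hence "and x (2^k) = (0::nat)" by (simp add: and_exp_eq_0_iff_not_bit)
  hence "and (2^k) x = (0::nat)" by (simp add: and.commute)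
  thus ?thesis by (simp add: disjunctive_add_eq_xor)
qed

lemma xor_lt: "(x::nat) < 2^k \<Longrightarrow> y < 2^k \<Longrightarrow> xor x y < 2^k"
  by (metis XOR_upper int_eq_iff nat_int_comparison(2)
    numeral_power_eq_nat_cancel_iff of_nat_xor_eq)

definition B :: "nat \<Rightarrow> nat list" where "B m = rev (map (\<lambda>i. 2^(Suc i)) [0..<m])"
lemma B_Suc: "B (Suc m) = 2^(Suc m) # B m" by (simp add: B_def)
lemma B_0: "B 0 = []" by (simp add: B_def)
lemma lc_cons: "lin_comb (b#bs) (c#cs) = (if c then xor b (lin_comb bs cs) else lin_comb bs cs)"
  by (simp add: lin_comb_def)
lemma lc_nil: "lin_comb [] cs = 0" by (simp add: lin_comb_def)

lemma lcB: "length cs = m \<Longrightarrow> even (lin_comb (B m) cs) \<and> lin_comb (B m) cs < 2^(Suc m)"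
proof (induction m arbitrary: cs)
  case 0 thus ?case by (simp add: B_0 lc_nil)
next
  case (Suc m)
  then obtain c cs' where cs: "cs = c # cs'" "length cs' = m" by (cases cs) auto
  from Suc.IH[OF cs(2)] have ih: "even (lin_comb (B m) cs')" "lin_comb (B m) cs' < 2^(Suc m)" by auto
  have x: "xor (2 * 2^m) (lin_comb (B m) cs') = 2 * 2^m + lin_comb (B m) cs'" using xor_pow[OF ih(2)] by simp
  show ?case using ih
    by (auto simp: cs B_Suc lc_cons x)
qed

lemma lcB_indep: "length cs = m \<Longrightarrow> lin_comb (B m) cs = 0 \<Longrightarrow> \<forall>c\<in>set cs. \<not> c"
proof (induction m arbitrary: cs)
  case 0 thus ?case by simp
next
  case (Suc m)
  then obtain c cs' where cs: "cs = c # cs'" "length cs' = m" by (cases cs) auto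
  have lt: "lin_comb (B m) cs' < 2^(Suc m)" using lcB[OF cs(2)] by auto
  have x: "xor (2 * 2^m) (lin_comb (B m) cs') = 2 * 2^m + lin_comb (B m) cs'" using xor_pow[OF lt] by simp
  show ?case using Suc.prems Suc.IH[OF cs(2)] lt
    by (auto simp: cs B_Suc lc_cons x split: if_splits)
qed

lemma lcB_span: "even x \<Longrightarrow> x < 2^(Suc m) \<Longrightarrow> \<exists>cs. length cs = m \<and> lin_comb (B m) cs = x"
proof (induction m arbitrary: x)
  case 0 thus ?case by (auto simp: B_0 lc_nil)
next
  case (Suc m)
  show ?case
  proof (cases "x < 2^(Suc m)")
    case True
    then obtain cs where "length cs = m" "lin_comb (B m) cs = x" using Suc by blast
    thus ?thesis by (intro exI[of _ "False # cs"]) (auto simp: B_Suc lc_cons)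
  next
    case False
    have "even (x - 2^Suc m)" using Suc.prems by simp
    moreover have "x - 2^Suc m < 2^Suc m" using Suc.prems by simp
    ultimately obtain cs where cs: "length cs = m" "lin_comb (B m) cs = x - 2^Suc m" using Suc.IH by blast
    have "lin_comb (B m) cs < 2^Suc m" using lcB[OF cs(1)] by auto
    hence x: "xor (2 * 2^m) (lin_comb (B m) cs) = 2 * 2^m + lin_comb (B m) cs" using xor_pow[of _ "Suc m"] by simp
    thus ?thesis using cs False by (intro exI[of _ "True # cs"]) (auto simp: B_Suc lc_cons)
  qed
qed

lemma hyper: "\<kappa> \<ge> 1 \<Longrightarrow> {x. even x \<and> x < 2^\<kappa>} \<in> Xi \<kappa> (\<kappa> - 1)"
proof -
  assume k: "\<kappa> \<ge> 1"
  define m where "m = \<kappa> - 1"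
  have km: "\<kappa> = Suc m" using k m_def by simp
  have sp: "span2 (B m) = {x. even x \<and> x < 2^\<kappa>}"
    unfolding span2_def km using lcB lcB_span by (auto simp: B_def) (metis length_map length_rev length_upt minus_nat.diff_0)
  show ?thesis unfolding Xi_def subspace_dim_def is_subspace_def
  proof (rule CollectI, intro conjI)
    show "{x. even x \<and> x < 2^\<kappa>} \<subseteq> W \<kappa>" by (auto simp: W_def)
    show "0 \<in> {x::nat. even x \<and> x < 2^\<kappa>}" by (simp add: W_def)
    show "\<forall>x\<in>{x::nat. even x \<and> x < 2 ^ \<kappa>}. \<forall>y\<in>{x. even x \<and> x < 2 ^ \<kappa>}. xor x y \<in> {x. even x \<and> x < 2 ^ \<kappa>}"
      by (auto simp: even_xor_iff intro: xor_lt)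
    show "\<exists>bs. length bs = \<kappa> - 1 \<and> set bs \<subseteq> {x. even x \<and> x < 2 ^ \<kappa>} \<and> lin_indep2 bs \<and> span2 bs = {x. even x \<and> x < 2 ^ \<kappa>}"
    proof (intro exI[of _ "B m"] conjI)
      show "length (B m) = \<kappa> - 1" by (simp add: B_def m_def)
      show "span2 (B m) = {x. even x \<and> x < 2 ^ \<kappa>}" by (rule sp)
      show "set (B m) \<subseteq> {x::nat. even x \<and> x < 2 ^ \<kappa>}" unfolding km B_def by auto
      show "lin_indep2 (B m)" unfolding lin_indep2_def
      proof (intro allI impI)
        fix cs assume "length cs = length (B m)" "lin_comb (B m) cs = 0"
        thus "\<forall>c\<in>set cs. \<not> c" using lcB_indep[of cs m] by (simp add: B_def)
      qed
    qed
  qed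
qed

lemma sum_d: fixes t :: real shows "finite S \<Longrightarrow> (\<Sum>i\<in>S. q i + (if i = 0 then -t else if i = 1 then t else 0)) =
   (\<Sum>i\<in>S. q i) - (if 0 \<in> S then t else 0) + (if (1::nat) \<in> S then t else 0)"
proof -
  assume f: "finite S"
  have "(\<Sum>i\<in>S. q i + (if i = 0 then -t else if i = 1 then t else 0)) =
        (\<Sum>i\<in>S. q i + ((if i = 0 then -t else 0) + (if i = (1::nat) then t else 0)))" by (rule sum.cong) auto
  also have "\<dots> = (\<Sum>i\<in>S. q i) + (\<Sum>i\<in>S. (if i = 0 then -t else 0)) + (\<Sum>i\<in>S. (if i = (1::nat) then t else 0))"
    by (simp only: sum.distrib add.assoc)
  also have "\<dots> = (\<Sum>i\<in>S. q i) - (if 0 \<in> S then t else 0) + (if (1::nat) \<in> S then t else 0)"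
    using f by (simp add: sum.delta)
  finally show ?thesis .
qed

theorem theorem6:
  fixes \<kappa> n :: nat and \<epsilon> :: real and q :: "nat \<Rightarrow> real"
  assumes "\<kappa> \<ge> 1" and "n \<ge> 1" and "0 < \<epsilon>" and "\<epsilon> < 1"
    and "local_minimizer (2^\<kappa>) (lam \<kappa> n \<epsilon>) (prob_simplex \<kappa>) q"
  shows "q 0 = 0"
proof (rule ccontr)
  assume q0: "q 0 \<noteq> 0"
  have qC: "q \<in> prob_simplex \<kappa>" and "\<exists>\<delta>>0. \<forall>q'\<in>prob_simplex \<kappa>. (\<forall>i<2^\<kappa>. \<bar>q' i - q i\<bar> < \<delta>) \<longrightarrow> lam \<kappa> n \<epsilon> q \<le> lam \<kappa> n \<epsilon> q'"
    using assms(5) unfolding local_minimizer_def by auto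
  then obtain \<delta> where d: "\<delta> > 0" "\<And>q'. q'\<in>prob_simplex \<kappa> \<Longrightarrow> (\<forall>i<2^\<kappa>. \<bar>q' i - q i\<bar> < \<delta>) \<Longrightarrow> lam \<kappa> n \<epsilon> q \<le> lam \<kappa> n \<epsilon> q'"
    by blast
  have two: "(2::nat) \<le> 2^\<kappa>" using assms(1)
    by (metis power_increasing power_one_right zero_less_numeral[where 'a=nat] one_le_numeral)
  have q0p: "q 0 > 0" using qC q0 two unfolding prob_simplex_def by force
  define t where "t = min (q 0) (\<delta>/2)"
  have t: "t > 0" "t \<le> q 0" "t < \<delta>" using q0p d(1) by (auto simp: t_def)
  define q' where "q' = (\<lambda>i. q i + (if i = 0 then -t else if i = 1 then t else 0))"
  have q'C: "q' \<in> prob_simplex \<kappa>"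
  proof -
    have fin: "finite {..<(2::nat)^\<kappa>}" by simp
    have "(\<Sum>i<2^\<kappa>. q' i) = (\<Sum>i<2^\<kappa>. q i) - t + t"
      unfolding q'_def using sum_d[OF fin, of q t] two by simp
    thus ?thesis using qC t two unfolding prob_simplex_def q'_def by auto
  qed
  have close: "\<forall>i<2^\<kappa>. \<bar>q' i - q i\<bar> < \<delta>" using t d(1) by (auto simp: q'_def)
  have le: "lam \<kappa> n \<epsilon> q \<le> lam \<kappa> n \<epsilon> q'" using d(2)[OF q'C close] .
  define c where "c = \<epsilon> / (2 - \<epsilon>)"
  have c: "0 < c" "c < 1" using assms(3,4) by (auto simp: c_def field_simps)
  have lnc: "ln c < 0" using c by simp
  have zeta': "zeta S q' = zeta S q - t + (if 1 \<in> S then t else 0)" if "S \<in> Xi \<kappa> (\<kappa> - 1)" for S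
  proof -
    have "S \<subseteq> W \<kappa>" "0 \<in> S" using that by (auto simp: Xi_def subspace_dim_def is_subspace_def)
    moreover have "finite S" using \<open>S \<subseteq> W \<kappa>\<close> by (auto simp: W_def intro: finite_subset)
    ultimately show ?thesis unfolding zeta_def q'_def using sum_d[of S q t] by simp
  qed
  have term_le: "c powr (real n * (1 - zeta S q')) \<le> c powr (real n * (1 - zeta S q))"
    if "S \<in> Xi \<kappa> (\<kappa> - 1)" for S
  proof -
    have "real n * (1 - zeta S q) \<le> real n * (1 - zeta S q')"
      using zeta'[OF that] t by (intro mult_left_mono) auto
    hence "exp (real n * (1 - zeta S q) * ln c) \<ge> exp (real n * (1 - zeta S q') * ln c)"
      using lnc by (simp add: mult_right_mono_neg)
    thus ?thesis using c by (simp add: powr_def)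
  qed
  define H where "H = {x::nat. even x \<and> x < 2^\<kappa>}"
  have H: "H \<in> Xi \<kappa> (\<kappa> - 1)" unfolding H_def by (rule hyper[OF assms(1)])
  have term_lt: "c powr (real n * (1 - zeta H q')) < c powr (real n * (1 - zeta H q))"
  proof -
    have "1 \<notin> H" by (simp add: H_def)
    hence "real n * (1 - zeta H q) < real n * (1 - zeta H q')"
      using zeta'[OF H] t assms(2) by simp
    hence "exp (real n * (1 - zeta H q) * ln c) > exp (real n * (1 - zeta H q') * ln c)"
      using lnc by (simp add: mult_strict_right_mono_neg)
    thus ?thesis using c by (simp add: powr_def)
  qed
  have finXi: "finite (Xi \<kappa> (\<kappa> - 1))"
  proof (rule finite_subset[of _ "Pow (W \<kappa>)"])
    show "Xi \<kappa> (\<kappa> - 1) \<subseteq> Pow (W \<kappa>)" by (auto simp: Xi_def subspace_dim_def is_subspace_def)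
  qed (simp add: W_def)
  have "(\<Sum>S\<in>Xi \<kappa> (\<kappa> - 1). c powr (real n * (1 - zeta S q'))) < (\<Sum>S\<in>Xi \<kappa> (\<kappa> - 1). c powr (real n * (1 - zeta S q)))"
    by (rule sum_strict_mono_ex1[OF finXi]) (use term_le term_lt H in auto)
  moreover have "(2 - \<epsilon>) ^ n * 2 powr (- real \<kappa>) > 0" using assms(4) by simp
  ultimately have "lam \<kappa> n \<epsilon> q' < lam \<kappa> n \<epsilon> q" unfolding lam_def c_def
    by (intro diff_strict_right_mono mult_strict_left_mono add_strict_left_mono) auto
  thus False using le by simp
qed
end
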